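(* Suppose Assumption 1 holds. Let $(\boldsymbol\lambda^*,\boldsymbol\gamma^* )\in\mathbb R^K\times\mathbb R^K$ be a minimizer of $$(\boldsymbol\lambda,\boldsymbol\gamma)\mapsto \langle\boldsymbol\lambda,\boldsymbol\alpha\rangle+\sum_{s=1}^K\mathbb E\big[(G(X,s,\boldsymbol\lambda,\boldsymbol\gamma))_+\,\big|\,S=s\big].$$ Set $c_{\boldsymbol\gamma^*,s}=\frac12\big(\frac{\bar\alpha\gamma^*_s}{\alpha_s p_s}-\langle\mathbf 1,\boldsymbol\gamma^*\rangle\big)$ and define, for $(x,s)\in\mathbb R^d\times[K]$, $$g^*(x,s)=\begin{cases} r & \text{if } G(x,s,\boldsymbol\lambda^*,\boldsymbol\gamma^* )\le 0,\\ \mathbb 1\big(\eta(x,s)\ge \tfrac12+c_{\boldsymbol\gamma^*,s}\big) & \text{otherwise.}\end{cases}$$ Then $g^*$ is an optimal classifier for problem (DPWA): it satisfies the constraints of (DPWA) and minimizes $\mathcal R$ among all classifiers with abstention satisfying them.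
   Context: Let $(X,S,Y)$ be a random triple with law $\mathbb P$ on $\mathbb R^d\times[K]\times\{0,1\}$, $[K]=\{1,\dots,K\}$. Write $p_s=\mathbb P(S=s)>0$ and $\eta(x,s)=\mathbb E[Y\mid X=x,S=s]$. A classifier with abstention is a measurable map $g:\mathbb R^d\times[K]\to\{0,1,r\}$, where $r$ means "reject". Define $\mathcal R(g)=\mathbb P(Y\neq g(X,S)\mid g(X,S)\neq r)$, $\mathrm{NA}_s(g)=\mathbb P(g(X,S)\neq r\mid S=s)$, $\mathrm{PT}_s(g)=\mathbb P(g(X,S)=1\mid S=s,\,g(X,S)\neq r)$, $\mathrm{PT}(g)=\mathbb P(g(X,S)=1\mid g(X,S)\neq r)$. Fix $\boldsymbol\alpha=(\alpha_1,\dots,\alpha_K)\in(0,1]^K$ and set $\bar\alpha=\sum_s p_s\alpha_s$. Problem (DPWA): minimize $\mathcal R(g)$ over classifiers with abstention subject to $\mathrm{NA}_s(g)=\alpha_s$ and $\mathrm{PT}_s(g)=\mathrm{PT}(g)$ for all $s\in[K]$. $\mathbf 1\in\mathbb R^K$ is the all-ones vector, $e_s$ the $s$-th standard basis vector, $(a)_+=\max(a,0)$. Assumption 1: for every $s\in[K]$, the conditional law of $\eta(X,S)$ given $S=s$ is non-atomic. Define $$G(x,s,\boldsymbol\lambda,\boldsymbol\gamma)=\Big|\tfrac{p_s}{2\bar\alpha}\big(1-2\eta(x,s)-\langle\boldsymbol\gamma,\mathbf 1\rangle\big)+\tfrac{\langle\boldsymbol\gamma,e_s\rangle}{2\alpha_s}\Big|-\tfrac{p_s}{2\bar\alpha}\big(1-\langle\boldsymbol\gamma,\mathbf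 1\rangle\big)-\langle\boldsymbol\lambda,e_s\rangle-\tfrac{\langle\boldsymbol\gamma,e_s\rangle}{2\alpha_s}.$$ *)

theory Defs
  imports "HOL-Probability.Probability"
begin

datatype outp = L0 | L1 | Rej

definition ev :: "'w measure \<Rightarrow> ('w \<Rightarrow> bool) \<Rightarrow> 'w set" where
  "ev M P = {w \<in> space M. P w}"

definition cprob :: "'w measure \<Rightarrow> 'w set \<Rightarrow> 'w set \<Rightarrow> real" where
  "cprob M A B = measure M (A \<inter> B) / measure M B"

definition psz :: "'w measure \<Rightarrow> ('w \<Rightarrow> nat) \<Rightarrow> nat \<Rightarrow> real" where
  "psz M S s = measure M (ev M (\<lambda>w. S w = s))"

definition abar :: "'w measure \<Rightarrow> ('w \<Rightarrow> nat) \<Rightarrow> nat \<Rightarrow> (nat \<Rightarrow> real) \<Rightarrow> real" where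
  "abar M S K \<alpha> = (\<Sum>s=1..K. psz M S s * \<alpha> s)"

definition risk :: "'w measure \<Rightarrow> ('w \<Rightarrow> 'x) \<Rightarrow> ('w \<Rightarrow> nat) \<Rightarrow> ('w \<Rightarrow> real)
    \<Rightarrow> ('x \<Rightarrow> nat \<Rightarrow> outp) \<Rightarrow> real" where
  "risk M X S Y g = cprob M
     (ev M (\<lambda>w. (g (X w) (S w) = L1 \<and> Y w \<noteq> 1) \<or> (g (X w) (S w) = L0 \<and> Y w \<noteq> 0)))
     (ev M (\<lambda>w. g (X w) (S w) \<noteq> Rej))"

definition NA :: "'w measure \<Rightarrow> ('w \<Rightarrow> 'x) \<Rightarrow> ('w \<Rightarrow> nat)
    \<Rightarrow> ('x \<Rightarrow> nat \<Rightarrow> outp) \<Rightarrow> nat \<Rightarrow> real" where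
  "NA M X S g s = cprob M (ev M (\<lambda>w. g (X w) (S w) \<noteq> Rej)) (ev M (\<lambda>w. S w = s))"

definition PTs :: "'w measure \<Rightarrow> ('w \<Rightarrow> 'x) \<Rightarrow> ('w \<Rightarrow> nat)
    \<Rightarrow> ('x \<Rightarrow> nat \<Rightarrow> outp) \<Rightarrow> nat \<Rightarrow> real" where
  "PTs M X S g s = cprob M (ev M (\<lambda>w. g (X w) (S w) = L1))
      (ev M (\<lambda>w. S w = s \<and> g (X w) (S w) \<noteq> Rej))"

definition PT :: "'w measure \<Rightarrow> ('w \<Rightarrow> 'x) \<Rightarrow> ('w \<Rightarrow> nat)
    \<Rightarrow> ('x \<Rightarrow> nat \<Rightarrow> outp) \<Rightarrow> real" where
  "PT M X S g = cprob M (ev M (\<lambda>w. g (X w) (S w) = L1)) (ev M (\<lambda>w. g (X w) (S w) \<noteq> Rej))"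

definition is_classifier :: "('x::topological_space \<Rightarrow> nat \<Rightarrow> outp) \<Rightarrow> bool" where
  "is_classifier g \<longleftrightarrow>
     (\<lambda>(x, s). g x s) \<in> measurable (borel \<Otimes>\<^sub>M count_space UNIV) (count_space UNIV)"

definition DPWA_feasible :: "'w measure \<Rightarrow> ('w \<Rightarrow> 'x::topological_space) \<Rightarrow> ('w \<Rightarrow> nat)
    \<Rightarrow> nat \<Rightarrow> (nat \<Rightarrow> real) \<Rightarrow> ('x \<Rightarrow> nat \<Rightarrow> outp) \<Rightarrow> bool" where
  "DPWA_feasible M X S K \<alpha> g \<longleftrightarrow> is_classifier g \<and>
     (\<forall>s\<in>{1..K}. NA M X S g s = \<alpha> s \<and> PTs M X S g s = PT M X S g)"

definition DPWA_optimal :: "'w measure \<Rightarrow> ('w \<Rightarrow> 'x::topological_space) \<Rightarrow> ('w \<Rightarrow> nat)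
    \<Rightarrow> ('w \<Rightarrow> real) \<Rightarrow> nat \<Rightarrow> (nat \<Rightarrow> real) \<Rightarrow> ('x \<Rightarrow> nat \<Rightarrow> outp) \<Rightarrow> bool" where
  "DPWA_optimal M X S Y K \<alpha> g \<longleftrightarrow> DPWA_feasible M X S K \<alpha> g \<and>
     (\<forall>h. DPWA_feasible M X S K \<alpha> h \<longrightarrow> risk M X S Y g \<le> risk M X S Y h)"

text \<open>eta is a version of E[Y | X, S]: a measurable function of (x,s) with
  E[Y 1{(X,S) \<in> B}] = E[eta(X,S) 1{(X,S) \<in> B}] for all measurable B.\<close>
definition is_regression :: "'w measure \<Rightarrow> ('w \<Rightarrow> 'x::topological_space) \<Rightarrow> ('w \<Rightarrow> nat)
    \<Rightarrow> ('w \<Rightarrow> real) \<Rightarrow> ('x \<Rightarrow> nat \<Rightarrow> real) \<Rightarrow> bool" where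
  "is_regression M X S Y \<eta> \<longleftrightarrow>
     (\<lambda>(x, s). \<eta> x s) \<in> borel_measurable (borel \<Otimes>\<^sub>M count_space UNIV) \<and>
     integrable M (\<lambda>w. \<eta> (X w) (S w)) \<and>
     (\<forall>B \<in> sets (borel \<Otimes>\<^sub>M count_space UNIV).
        (LINT w:ev M (\<lambda>w. (X w, S w) \<in> B)|M. Y w) =
        (LINT w:ev M (\<lambda>w. (X w, S w) \<in> B)|M. \<eta> (X w) (S w)))"

definition nonatomic :: "'a measure \<Rightarrow> bool" where
  "nonatomic N \<longleftrightarrow> (\<forall>A\<in>sets N. 0 < emeasure N A \<longrightarrow>
      (\<exists>B\<in>sets N. B \<subseteq> A \<and> 0 < emeasure N B \<and> emeasure N B < emeasure N A))"

text \<open>The function G(x,s,lambda,gamma); vectors in R^K are functions on {1..K}.\<close>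
definition Gfun :: "'w measure \<Rightarrow> ('w \<Rightarrow> nat) \<Rightarrow> nat \<Rightarrow> (nat \<Rightarrow> real)
    \<Rightarrow> ('x \<Rightarrow> nat \<Rightarrow> real) \<Rightarrow> 'x \<Rightarrow> nat \<Rightarrow> (nat \<Rightarrow> real) \<Rightarrow> (nat \<Rightarrow> real) \<Rightarrow> real" where
  "Gfun M S K \<alpha> \<eta> x s lam gam =
     (let p = psz M S s; ab = abar M S K \<alpha>; sg = (\<Sum>t=1..K. gam t) in
      \<bar>p / (2 * ab) * (1 - 2 * \<eta> x s - sg) + gam s / (2 * \<alpha> s)\<bar>
      - p / (2 * ab) * (1 - sg) - lam s - gam s / (2 * \<alpha> s))"

definition dual_obj :: "'w measure \<Rightarrow> ('w \<Rightarrow> 'x) \<Rightarrow> ('w \<Rightarrow> nat) \<Rightarrow> nat \<Rightarrow> (nat \<Rightarrow> real)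
    \<Rightarrow> ('x \<Rightarrow> nat \<Rightarrow> real) \<Rightarrow> (nat \<Rightarrow> real) \<Rightarrow> (nat \<Rightarrow> real) \<Rightarrow> real" where
  "dual_obj M X S K \<alpha> \<eta> lam gam =
     (\<Sum>s=1..K. lam s * \<alpha> s) +
     (\<Sum>s=1..K. (LINT w:ev M (\<lambda>w. S w = s)|M. max 0 (Gfun M S K \<alpha> \<eta> (X w) s lam gam))
                 / psz M S s)"

definition gstar :: "'w measure \<Rightarrow> ('w \<Rightarrow> nat) \<Rightarrow> nat \<Rightarrow> (nat \<Rightarrow> real)
    \<Rightarrow> ('x \<Rightarrow> nat \<Rightarrow> real) \<Rightarrow> (nat \<Rightarrow> real) \<Rightarrow> (nat \<Rightarrow> real) \<Rightarrow> 'x \<Rightarrow> nat \<Rightarrow> outp" where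
  "gstar M S K \<alpha> \<eta> lam gam x s =
     (let c = (abar M S K \<alpha> * gam s / (\<alpha> s * psz M S s) - (\<Sum>t=1..K. gam t)) / 2 in
      if Gfun M S K \<alpha> \<eta> x s lam gam \<le> 0 then Rej
      else if \<eta> x s \<ge> 1/2 + c then L1 else L0)"

end

theory Submission
  imports Defs
begin


lemma lip_pos:
  fixes A B k m \<tau> :: real
  assumes "0 \<le> \<tau>"
  shows "\<bar>max 0 (\<bar>A+\<tau>*k\<bar> - (B+\<tau>*m)) - max 0 (\<bar>A\<bar>-B)\<bar> \<le> \<tau>*(\<bar>k\<bar>+\<bar>m\<bar>)"
proof -
  have m: "\<bar>max 0 x - max 0 y\<bar> \<le> \<bar>x - y\<bar>" for x y :: real by (simp add: max_def)
  have a: "\<bar>\<bar>A+\<tau>*k\<bar> - \<bar>A\<bar>\<bar> \<le> \<bar>\<tau>*k\<bar>" by (rule order_trans[OF abs_triangle_ineq3]) simp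
  have k1: "\<bar>\<tau>*k\<bar> = \<tau>*\<bar>k\<bar>" "\<bar>\<tau>*m\<bar> = \<tau>*\<bar>m\<bar>" using assms by (auto simp: abs_mult)
  have "\<bar>(\<bar>A+\<tau>*k\<bar> - (B+\<tau>*m)) - (\<bar>A\<bar>-B)\<bar> \<le> \<bar>\<tau>*k\<bar> + \<bar>\<tau>*m\<bar>"
    using a by linarith
  then show ?thesis using m[of "\<bar>A+\<tau>*k\<bar> - (B+\<tau>*m)" "\<bar>A\<bar>-B"] k1 by (simp add: distrib_left)
qed

lemma evt_lin:
  fixes A B k m :: real
  assumes "A \<noteq> 0" "\<bar>A\<bar> - B \<noteq> 0"
  shows "\<exists>\<delta>>0. \<forall>\<tau>. 0 < \<tau> \<longrightarrow> \<tau> \<le> \<delta> \<longrightarrow>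
    max 0 (\<bar>A+\<tau>*k\<bar> - (B+\<tau>*m)) - max 0 (\<bar>A\<bar>-B) =
      \<tau>*(if \<bar>A\<bar>-B \<le> 0 then 0 else if A \<le> 0 then -k-m else k-m)"
proof -
  define \<delta> where "\<delta> = min \<bar>A\<bar> \<bar>\<bar>A\<bar>-B\<bar> / (\<bar>k\<bar>+\<bar>m\<bar>+1)"
  have dpos: "\<delta> > 0" using assms unfolding \<delta>_def by (auto intro!: divide_pos_pos)
  show ?thesis
  proof (intro exI[of _ \<delta>] conjI allI impI dpos)
    fix \<tau> :: real assume t: "0 < \<tau>" "\<tau> \<le> \<delta>"
    have "\<tau>*(\<bar>k\<bar>+\<bar>m\<bar>+1) \<le> min \<bar>A\<bar> \<bar>\<bar>A\<bar>-B\<bar>"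
      using t unfolding \<delta>_def by (simp add: pos_le_divide_eq add_pos_nonneg)
    then have h: "\<tau>*\<bar>k\<bar> + \<tau>*\<bar>m\<bar> + \<tau> \<le> \<bar>A\<bar>" "\<tau>*\<bar>k\<bar> + \<tau>*\<bar>m\<bar> + \<tau> \<le> \<bar>\<bar>A\<bar>-B\<bar>"
      by (auto simp: algebra_simps)
    have k1: "\<bar>\<tau>*k\<bar> = \<tau>*\<bar>k\<bar>" "\<bar>\<tau>*m\<bar> = \<tau>*\<bar>m\<bar>" using t by (auto simp: abs_mult)
    have k2: "- (\<tau>*\<bar>k\<bar>) \<le> \<tau>*k" "\<tau>*k \<le> \<tau>*\<bar>k\<bar>" "- (\<tau>*\<bar>m\<bar>) \<le> \<tau>*m" "\<tau>*m \<le> \<tau>*\<bar>m\<bar>"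
      using k1 by (metis abs_ge_self abs_ge_minus_self minus_le_iff)+
    have n: "0 \<le> \<tau>*\<bar>k\<bar>" "0 \<le> \<tau>*\<bar>m\<bar>" using t by auto
    show "max 0 (\<bar>A+\<tau>*k\<bar> - (B+\<tau>*m)) - max 0 (\<bar>A\<bar>-B) =
      \<tau>*(if \<bar>A\<bar>-B \<le> 0 then 0 else if A \<le> 0 then -k-m else k-m)"
    proof (cases "A > 0")
      case True
      have e2: "\<bar>A\<bar> = A" using True by auto
      have e1: "\<bar>A+\<tau>*k\<bar> = A+\<tau>*k" by (rule abs_of_nonneg) (use h k2 n t e2 in linarith)
      show ?thesis
      proof (cases "A - B > 0")
        case True
        have e3: "\<bar>\<bar>A\<bar>-B\<bar> = A - B" using True e2 by auto
        have x1: "max 0 (\<bar>A+\<tau>*k\<bar> - (B+\<tau>*m)) = (A+\<tau>*k) - (B+\<tau>*m)"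
          unfolding e1 by (rule max_absorb2) (use h k2 n t e1 e2 e3 in linarith)
        have x2: "max 0 (\<bar>A\<bar>-B) = A - B" using True e2 by simp
        show ?thesis unfolding x1 x2 using True \<open>A > 0\<close> e2 by (simp add: algebra_simps)
      next
        case False
        then have F2: "A - B < 0" using assms e2 by auto
        have e3: "\<bar>\<bar>A\<bar>-B\<bar> = B - A" using F2 e2 by auto
        have x1: "max 0 (\<bar>A+\<tau>*k\<bar> - (B+\<tau>*m)) = 0"
          by (rule max_absorb1) (use h k2 n t e1 e2 e3 in linarith)
        have x2: "max 0 (\<bar>A\<bar>-B) = 0" using F2 e2 by simp
        show ?thesis unfolding x1 x2 using F2 e2 by simp
      qed
    next
      case False
      then have F: "A < 0" using assms by auto
      have e2: "\<bar>A\<bar> = -A" using F by auto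
      have e1: "\<bar>A+\<tau>*k\<bar> = -A-\<tau>*k" using abs_of_neg[of "A+\<tau>*k"] h k2 n t e2 by linarith
      show ?thesis
      proof (cases "-A - B > 0")
        case True
        have e3: "\<bar>\<bar>A\<bar>-B\<bar> = -A - B" using True e2 by auto
        have x1: "max 0 (\<bar>A+\<tau>*k\<bar> - (B+\<tau>*m)) = (-A-\<tau>*k) - (B+\<tau>*m)"
          unfolding e1 by (rule max_absorb2) (use h k2 n t e1 e2 e3 in linarith)
        have x2: "max 0 (\<bar>A\<bar>-B) = -A - B" using True e2 by simp
        show ?thesis unfolding x1 x2 using True F e2 by (simp add: algebra_simps)
      next
        case False
        then have F2: "-A - B < 0" using assms e2 by auto
        have e3: "\<bar>\<bar>A\<bar>-B\<bar> = B + A" using F2 e2 by auto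
        have x1: "max 0 (\<bar>A+\<tau>*k\<bar> - (B+\<tau>*m)) = 0"
          by (rule max_absorb1) (use h k2 n t e1 e2 e3 in linarith)
        have x2: "max 0 (\<bar>A\<bar>-B) = 0" using F2 e2 by simp
        show ?thesis unfolding x1 x2 using F2 e2 by simp
      qed
    qed
  qed
qed




locale ctx = prob_space M for M :: "'w measure" +
  fixes X :: "'w \<Rightarrow> real ^ 'd" and S :: "'w \<Rightarrow> nat"
    and Y :: "'w \<Rightarrow> real" and K :: nat and \<alpha> :: "nat \<Rightarrow> real"
    and \<eta> :: "real ^ 'd \<Rightarrow> nat \<Rightarrow> real" and lam gam :: "nat \<Rightarrow> real"
  assumes X_meas: "X \<in> borel_measurable M"
    and S_meas: "S \<in> measurable M (count_space UNIV)"
    and Y_meas: "Y \<in> borel_measurable M"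
    and S_AE: "AE w in M. S w \<in> {1..K}"
    and Y_AE: "AE w in M. Y w \<in> {0, 1}"
    and pp_pos: "\<forall>s\<in>{1..K}. psz M S s > 0"
    and al_rng: "\<forall>s\<in>{1..K}. 0 < \<alpha> s \<and> \<alpha> s \<le> 1"
    and reg: "is_regression M X S Y \<eta>"
    and nonat: "\<forall>s\<in>{1..K}. nonatomic
           (distr (uniform_measure M (ev M (\<lambda>w. S w = s))) borel (\<lambda>w. \<eta> (X w) (S w)))"
    and minim: "\<forall>lam' gam'. dual_obj M X S K \<alpha> \<eta> lam gam \<le> dual_obj M X S K \<alpha> \<eta> lam' gam'"
begin

definition "e w = \<eta> (X w) (S w)"

lemma XS_meas: "(\<lambda>w. (X w, S w)) \<in> measurable M (borel \<Otimes>\<^sub>M count_space UNIV)"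
  using X_meas S_meas by (intro measurable_Pair) auto

lemma e_meas[measurable]: "e \<in> borel_measurable M"
proof -
  have "(\<lambda>(x, s). \<eta> x s) \<in> borel_measurable (borel \<Otimes>\<^sub>M count_space UNIV)"
    using reg unfolding is_regression_def by auto
  from measurable_compose[OF XS_meas this] show ?thesis unfolding e_def by simp
qed

lemma e_int: "integrable M e"
  using reg unfolding is_regression_def e_def by auto

lemma S_meas'[measurable]: "S \<in> measurable M (count_space UNIV)" by (rule S_meas)

lemma fS_meas[measurable]: "(\<lambda>w. f (S w) :: real) \<in> borel_measurable M"
  by (rule measurable_compose[OF S_meas]) auto

lemma ev_sets[measurable]: "Measurable.pred M P \<Longrightarrow> ev M P \<in> sets M"
  unfolding ev_def by measurable

lemma Seq_pred[measurable]: "Measurable.pred M (\<lambda>w. S w = t)"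
  by measurable

definition "pp t = psz M S t"
definition "ab = abar M S K \<alpha>"
definition "sg gm = (\<Sum>t=1..K. gm t)"
definition "aa t = pp t / (2*ab)"
definition "Av t gm u = aa t * (1 - 2 * u - sg gm) + gm t/(2*\<alpha> t)"
definition "Bv t lm gm = aa t*(1 - sg gm) + lm t + gm t/(2*\<alpha> t)"
definition "Gw lm gm w = \<bar>Av (S w) gm (e w)\<bar> - Bv (S w) lm gm"
definition "gs = gstar M S K \<alpha> \<eta> lam gam"
definition "ind t w = (indicator (ev M (\<lambda>w. S w = t)) w :: real)"
definition "Hf lm gm w = (\<Sum>t\<in>{1..K}. ind t w * (max 0 (Gw lm gm w) / pp t))"

lemma Gfun_eq: "Gfun M S K \<alpha> \<eta> x t lm gm = \<bar>Av t gm (\<eta> x t)\<bar> - Bv t lm gm"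
  unfolding Gfun_def Av_def Bv_def aa_def pp_def ab_def sg_def Let_def by simp

lemma K_pos: "1 \<le> K"
proof (rule ccontr)
  assume "\<not> 1 \<le> K"
  then have "K = 0" by simp
  with S_AE have "AE w in M. False" by simp
  then show False by (simp add: AE_False)
qed

lemma pp_pos': "t \<in> {1..K} \<Longrightarrow> pp t > 0" using pp_pos unfolding pp_def by auto
lemma al_pos: "t \<in> {1..K} \<Longrightarrow> \<alpha> t > 0" using al_rng by auto

lemma ab_pos: "ab > 0"
proof -
  have "ab = (\<Sum>t=1..K. pp t * \<alpha> t)" unfolding ab_def abar_def pp_def by simp
  also have "\<dots> > 0" using K_pos pp_pos' al_pos by (intro sum_pos) auto
  finally show ?thesis .
qed

lemma aa_pos: "t \<in> {1..K} \<Longrightarrow> aa t > 0" unfolding aa_def using pp_pos' ab_pos by auto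

lemma Av_le_iff:
  assumes "t \<in> {1..K}"
  shows "(1/2 + (ab * gam t / (\<alpha> t * pp t) - sg gam) / 2 \<le> u) \<longleftrightarrow> Av t gam u \<le> 0"
proof -
  have p: "pp t > 0" "\<alpha> t > 0" "ab > 0" using assms pp_pos' al_pos ab_pos by auto
  show ?thesis unfolding Av_def aa_def using p
    by (simp add: field_simps)
qed

lemma gs_eq: "t \<in> {1..K} \<Longrightarrow> gs x t = (if \<bar>Av t gam (\<eta> x t)\<bar> - Bv t lam gam \<le> 0 then Rej
    else if Av t gam (\<eta> x t) \<le> 0 then L1 else L0)"
  unfolding gs_def gstar_def Let_def Gfun_eq
  using Av_le_iff[of t "\<eta> x t"] unfolding ab_def pp_def sg_def by simp

lemma meas_Se[measurable]:
  fixes F :: "nat \<Rightarrow> real \<Rightarrow> real"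
  assumes "\<And>t. F t \<in> borel_measurable borel"
  shows "(\<lambda>w. F (S w) (e w)) \<in> borel_measurable M"
  by (rule measurable_compose_countable[OF _ S_meas]) (rule measurable_compose[OF e_meas assms])

lemma Av_meas[measurable]: "(\<lambda>w. Av (S w) gm (e w)) \<in> borel_measurable M"
  by (rule meas_Se) (unfold Av_def, measurable)

lemma Gw_meas[measurable]: "Gw lm gm \<in> borel_measurable M"
  unfolding Gw_def by (rule meas_Se) (unfold Av_def Bv_def, measurable)

lemma ind_meas[measurable]: "ind t \<in> borel_measurable M"
  unfolding ind_def by measurable

lemma ind_simp: "w \<in> space M \<Longrightarrow> ind t w = (if S w = t then 1 else 0)"
  unfolding ind_def ev_def by auto

lemma sum_collapse:
  assumes "w \<in> space M" "S w \<in> {1..K}"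
  shows "(\<Sum>t\<in>{1..K}. ind t w * f t) = f (S w)"
proof -
  have "(\<Sum>t\<in>{1..K}. ind t w * f t) = (\<Sum>t\<in>{1..K}. if t = S w then f t else 0)"
    using assms(1) by (intro sum.cong) (auto simp: ind_simp)
  also have "\<dots> = f (S w)" using assms(2) by simp

  finally show ?thesis .
qed

lemma Hf_eq: "w \<in> space M \<Longrightarrow> S w \<in> {1..K} \<Longrightarrow> Hf lm gm w = max 0 (Gw lm gm w) / pp (S w)"
  unfolding Hf_def by (rule sum_collapse)

lemma Av_lin: "Av t gm u = Av t gm 0 - 2 * aa t * u"
  unfolding Av_def by (simp add: algebra_simps)

lemma ind_term_int:
  assumes "t \<in> {1..K}"
  shows "integrable M (\<lambda>w. ind t w * (max 0 (Gw lm gm w) / pp t))"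
proof (rule Bochner_Integration.integrable_bound[where f="\<lambda>w. (\<bar>Av t gm 0\<bar> + \<bar>Bv t lm gm\<bar> + 2 * aa t * \<bar>e w\<bar>) / pp t"])
  show "integrable M (\<lambda>w. (\<bar>Av t gm 0\<bar> + \<bar>Bv t lm gm\<bar> + 2 * aa t * \<bar>e w\<bar>) / pp t)"
    using e_int by (intro integrable_divide integrable_add integrable_mult_right) auto
  show "(\<lambda>w. ind t w * (max 0 (Gw lm gm w) / pp t)) \<in> borel_measurable M" by measurable
  show "AE w in M. norm (ind t w * (max 0 (Gw lm gm w) / pp t))
      \<le> norm ((\<bar>Av t gm 0\<bar> + \<bar>Bv t lm gm\<bar> + 2 * aa t * \<bar>e w\<bar>) / pp t)"
  proof (rule AE_I2)
    fix w assume w: "w \<in> space M"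
    have p: "pp t > 0" "aa t > 0" using assms pp_pos' aa_pos by auto
    have "\<bar>max 0 (Gw lm gm w)\<bar> \<le> \<bar>Av t gm 0\<bar> + \<bar>Bv t lm gm\<bar> + 2 * aa t * \<bar>e w\<bar>" if "S w = t"
    proof -
      have "\<bar>Av t gm (e w)\<bar> \<le> \<bar>Av t gm 0\<bar> + 2 * aa t * \<bar>e w\<bar>"
        using p by (subst Av_lin) (simp add: abs_mult abs_triangle_ineq4 order_trans[OF abs_triangle_ineq4])
      moreover have mm: "\<bar>max 0 (\<bar>a\<bar> - b)\<bar> \<le> \<bar>a\<bar> + \<bar>b\<bar>" for a b :: real by (auto simp: max_def)
      ultimately show ?thesis unfolding Gw_def that
        using mm[of "Av t gm (e w)" "Bv t lm gm"] by linarith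
    qed
    then show "norm (ind t w * (max 0 (Gw lm gm w) / pp t))
      \<le> norm ((\<bar>Av t gm 0\<bar> + \<bar>Bv t lm gm\<bar> + 2 * aa t * \<bar>e w\<bar>) / pp t)"
      using w p by (auto simp: ind_simp divide_right_mono abs_of_nonneg)
  qed
qed

lemma Hf_int: "integrable M (Hf lm gm)"
  unfolding Hf_def by (rule Bochner_Integration.integrable_sum, rule ind_term_int) auto

lemma dual_eq: "dual_obj M X S K \<alpha> \<eta> lm gm = (\<Sum>t=1..K. lm t * \<alpha> t) + integral\<^sup>L M (Hf lm gm)"
proof -
  have "(LINT w:ev M (\<lambda>w. S w = t)|M. max 0 (Gfun M S K \<alpha> \<eta> (X w) t lm gm)) / psz M S t
     = integral\<^sup>L M (\<lambda>w. ind t w * (max 0 (Gw lm gm w) / pp t))" for t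
  proof -
    have "(LINT w:ev M (\<lambda>w. S w = t)|M. max 0 (Gfun M S K \<alpha> \<eta> (X w) t lm gm))
      = integral\<^sup>L M (\<lambda>w. ind t w * max 0 (Gw lm gm w))"
      unfolding set_lebesgue_integral_def
      by (intro Bochner_Integration.integral_cong) (auto simp: ind_def indicator_def ev_def Gfun_eq Gw_def e_def)
    then show ?thesis by (simp add: pp_def)
  qed
  then have "(\<Sum>s=1..K. (LINT w:ev M (\<lambda>w. S w = s)|M. max 0 (Gfun M S K \<alpha> \<eta> (X w) s lm gm)) / psz M S s)
      = (\<Sum>t=1..K. integral\<^sup>L M (\<lambda>w. ind t w * (max 0 (Gw lm gm w) / pp t)))" by simp
  also have "\<dots> = integral\<^sup>L M (Hf lm gm)"
    unfolding Hf_def by (rule Bochner_Integration.integral_sum[symmetric]) (rule ind_term_int)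
  finally show ?thesis unfolding dual_obj_def by simp
qed

definition "dd kk mm w = (if Gw lam gam w \<le> 0 then 0 else if Av (S w) gam (e w) \<le> 0 then -kk-mm else kk-mm)"

lemma dd_meas[measurable]: "dd kk mm \<in> borel_measurable M"
  unfolding dd_def by measurable

lemma Gw_S: "Gw lm gm w = \<bar>Av (S w) gm (e w)\<bar> - Bv (S w) lm gm" by (simp add: Gw_def)

lemma dir_ineq:
  fixes L Gm :: "real \<Rightarrow> nat \<Rightarrow> real" and c :: real and k m :: "nat \<Rightarrow> real"
  assumes obj: "\<And>\<tau>. 0 < \<tau> \<Longrightarrow> (\<Sum>t=1..K. lam t * \<alpha> t) + integral\<^sup>L M (Hf lam gam)
        \<le> (\<Sum>t=1..K. L \<tau> t * \<alpha> t) + integral\<^sup>L M (Hf (L \<tau>) (Gm \<tau>))"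
    and lin: "\<And>\<tau>. (\<Sum>t=1..K. L \<tau> t * \<alpha> t) = (\<Sum>t=1..K. lam t * \<alpha> t) + \<tau> * c"
    and Ak: "\<And>\<tau> t u. t \<in> {1..K} \<Longrightarrow> Av t (Gm \<tau>) u = Av t gam u + \<tau> * k t"
    and Bm: "\<And>\<tau> t. t \<in> {1..K} \<Longrightarrow> Bv t (L \<tau>) (Gm \<tau>) = Bv t lam gam + \<tau> * m t"
    and good: "AE w in M. Av (S w) gam (e w) \<noteq> 0 \<and> \<bar>Av (S w) gam (e w)\<bar> - Bv (S w) lam gam \<noteq> 0"
  shows "0 \<le> c + integral\<^sup>L M (\<lambda>w. \<Sum>t\<in>{1..K}. ind t w * (dd (k t) (m t) w / pp t))"
proof -
  define \<tau>n where "\<tau>n n = 1 / (real n + 1)" for n :: nat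
  define q where "q n w = (Hf (L (\<tau>n n)) (Gm (\<tau>n n)) w - Hf lam gam w) * (real n + 1)" for n w
  define d where "d w = (\<Sum>t\<in>{1..K}. ind t w * (dd (k t) (m t) w / pp t))" for w
  define C where "C = (\<Sum>t\<in>{1..K}. (\<bar>k t\<bar> + \<bar>m t\<bar>) / pp t)"
  have \<tau>pos: "\<tau>n n > 0" for n unfolding \<tau>n_def by auto
  have \<tau>mul: "\<tau>n n * (real n + 1) = 1" for n unfolding \<tau>n_def by auto
  have Hmeas: "Hf lm gm \<in> borel_measurable M" for lm gm using Hf_int by auto
  have d_meas: "d \<in> borel_measurable M" unfolding d_def ind_def by measurable
  have q_meas: "q n \<in> borel_measurable M" for n unfolding q_def using Hmeas by measurable
  have diff: "Hf (L \<tau>) (Gm \<tau>) w - Hf lam gam w =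
      (max 0 (\<bar>Av (S w) gam (e w) + \<tau> * k (S w)\<bar> - (Bv (S w) lam gam + \<tau> * m (S w)))
        - max 0 (\<bar>Av (S w) gam (e w)\<bar> - Bv (S w) lam gam)) / pp (S w)"
    if w: "w \<in> space M" "S w \<in> {1..K}" for \<tau> w
    using w by (simp add: Hf_eq Gw_S Ak Bm diff_divide_distrib)
  have ppS: "pp (S w) > 0" if "S w \<in> {1..K}" for w using pp_pos' that by auto
  have bound: "AE w in M. norm (q n w) \<le> C" for n
    using S_AE AE_space
  proof eventually_elim
    case (elim w)
    have w: "w \<in> space M" using elim by simp
    have elim: "S w \<in> {1..K}" using elim by simp
    show ?case
    proof -
      let ?t = "S w"
      have "\<bar>q n w\<bar> = \<bar>max 0 (\<bar>Av ?t gam (e w) + \<tau>n n * k ?t\<bar> - (Bv ?t lam gam + \<tau>n n * m ?t))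
        - max 0 (\<bar>Av ?t gam (e w)\<bar> - Bv ?t lam gam)\<bar> / pp ?t * (real n + 1)"
        unfolding q_def diff[OF w elim] using ppS[OF elim] by (simp add: abs_mult abs_divide)
      also have "\<dots> \<le> \<tau>n n * (\<bar>k ?t\<bar> + \<bar>m ?t\<bar>) / pp ?t * (real n + 1)"
        using ppS[OF elim] \<tau>pos[of n] lip_pos[of "\<tau>n n"]
        by (intro mult_right_mono divide_right_mono) auto
      also have "\<dots> = (\<tau>n n * (real n + 1)) * (\<bar>k ?t\<bar> + \<bar>m ?t\<bar>) / pp ?t" by simp
      also have "\<dots> = (\<bar>k ?t\<bar> + \<bar>m ?t\<bar>) / pp ?t" unfolding \<tau>mul by simp
      also have "\<dots> \<le> C" unfolding C_def
        by (rule member_le_sum[where f="\<lambda>t. (\<bar>k t\<bar> + \<bar>m t\<bar>) / pp t"]) (use elim pp_pos' in \<open>auto intro: divide_nonneg_pos\<close>)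
      finally show ?thesis by simp
    qed
  qed
  have conv: "AE w in M. (\<lambda>n. q n w) \<longlonglongrightarrow> d w"
    using S_AE good AE_space
  proof eventually_elim
    case (elim w)
    have w: "w \<in> space M" and t: "S w \<in> {1..K}" using elim by auto
    define A0 where "A0 = Av (S w) gam (e w)"
    define B0 where "B0 = Bv (S w) lam gam"
    have g: "A0 \<noteq> 0" "\<bar>A0\<bar> - B0 \<noteq> 0" using elim unfolding A0_def B0_def by auto
    obtain \<delta> where \<delta>: "\<delta> > 0" and ev: "\<And>\<tau>. 0 < \<tau> \<Longrightarrow> \<tau> \<le> \<delta> \<Longrightarrow>
      max 0 (\<bar>A0+\<tau>*k (S w)\<bar> - (B0+\<tau>*m (S w))) - max 0 (\<bar>A0\<bar>-B0) =
      \<tau>*(if \<bar>A0\<bar>-B0 \<le> 0 then 0 else if A0 \<le> 0 then -k (S w)-m (S w) else k (S w)-m (S w))"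
      using evt_lin[OF g, of "k (S w)" "m (S w)"] by blast
    obtain N :: nat where N: "1/\<delta> < real N" using reals_Archimedean2 by blast
    have dw: "d w = dd (k (S w)) (m (S w)) w / pp (S w)" unfolding d_def by (rule sum_collapse[OF w t])
    show ?case
    proof (rule tendsto_eventually, unfold eventually_sequentially, intro exI allI impI)
      fix n assume n: "N \<le> n"
      have "1 / \<delta> < real n + 1" using N n by linarith
      then have le: "\<tau>n n \<le> \<delta>" unfolding \<tau>n_def using \<delta> by (simp add: field_simps)
      have "q n w = (\<tau>n n * (real n + 1)) * (if \<bar>A0\<bar>-B0 \<le> 0 then 0 else if A0 \<le> 0 then -k (S w)-m (S w) else k (S w)-m (S w)) / pp (S w)"
        unfolding q_def diff[OF w t] A0_def[symmetric] B0_def[symmetric] ev[OF \<tau>pos le] by simp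
      also have "\<dots> = d w" unfolding \<tau>mul dw dd_def Gw_S A0_def B0_def by simp
      finally show "q n w = d w" .
    qed
  qed
  have lim: "(\<lambda>n. integral\<^sup>L M (q n)) \<longlonglongrightarrow> integral\<^sup>L M d"
    by (rule integral_dominated_convergence[where w="\<lambda>_. C"]) (use d_meas q_meas conv bound in auto)
  have qint: "integral\<^sup>L M (q n) = (integral\<^sup>L M (Hf (L (\<tau>n n)) (Gm (\<tau>n n))) - integral\<^sup>L M (Hf lam gam)) * (real n + 1)" for n
    unfolding q_def using Hf_int by simp
  have "0 \<le> c + integral\<^sup>L M (q n)" for n
  proof -
    have "0 \<le> \<tau>n n * c + integral\<^sup>L M (Hf (L (\<tau>n n)) (Gm (\<tau>n n))) - integral\<^sup>L M (Hf lam gam)"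
      using obj[OF \<tau>pos[of n]] lin[of "\<tau>n n"] by linarith
    then have "0 \<le> (\<tau>n n * c + integral\<^sup>L M (Hf (L (\<tau>n n)) (Gm (\<tau>n n))) - integral\<^sup>L M (Hf lam gam)) * (real n + 1)"
      by simp
    also have "\<dots> = c + integral\<^sup>L M (q n)" unfolding qint using \<tau>mul[of n] by (simp add: algebra_simps)
    finally show ?thesis .
  qed
  moreover have "(\<lambda>n. c + integral\<^sup>L M (q n)) \<longlonglongrightarrow> c + integral\<^sup>L M d"
    by (intro tendsto_add tendsto_const lim)
  ultimately have "0 \<le> c + integral\<^sup>L M d"
    by (intro LIMSEQ_le_const[of _ "c + integral\<^sup>L M d"]) auto
  then show ?thesis unfolding d_def .
qed

lemma point_null:
  assumes t: "t \<in> {1..K}"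
  shows "AE w in M. \<not> (S w = t \<and> e w = u)"
proof -
  define A where "A = ev M (\<lambda>w. S w = t)"
  have A: "A \<in> sets M" unfolding A_def by measurable
  define N where "N = distr (uniform_measure M A) borel e"
  have eeq: "(\<lambda>w. \<eta> (X w) (S w)) = e" by (rule ext) (simp add: e_def)
  have na: "nonatomic N" using nonat t unfolding N_def A_def eeq by auto
  have em: "e \<in> measurable (uniform_measure M A) borel" by measurable
  have "emeasure N {u} = 0"
  proof (rule ccontr)
    assume "emeasure N {u} \<noteq> 0"
    then have "0 < emeasure N {u}" by (simp add: zero_less_iff_neq_zero)
    moreover have "{u} \<in> sets N" unfolding N_def by simp
    ultimately obtain B where B: "B \<in> sets N" "B \<subseteq> {u}" "0 < emeasure N B" "emeasure N B < emeasure N {u}"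
      using na unfolding nonatomic_def by blast
    then have "B = {} \<or> B = {u}" by auto
    then show False using B by auto
  qed
  then have "emeasure (uniform_measure M A) (e -` {u} \<inter> space M) = 0"
    unfolding N_def by (subst (asm) emeasure_distr[OF em]) auto
  moreover have "e -` {u} \<inter> space M \<in> sets M" by measurable
  ultimately have "emeasure M (A \<inter> (e -` {u} \<inter> space M)) = 0"
    using A by (simp add: emeasure_eq_measure)
  moreover have "A \<inter> (e -` {u} \<inter> space M) = ev M (\<lambda>w. S w = t \<and> e w = u)"
    unfolding A_def ev_def by auto
  ultimately have "ev M (\<lambda>w. S w = t \<and> e w = u) \<in> null_sets M"
    by (intro null_setsI) (auto intro: ev_sets)
  from AE_not_in[OF this] AE_space show ?thesis by eventually_elim (auto simp: ev_def)
qed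

definition "V t = {Av t gam 0/(2*aa t), (Av t gam 0 - Bv t lam gam)/(2*aa t), (Av t gam 0 + Bv t lam gam)/(2*aa t)}"

lemma good: "AE w in M. Av (S w) gam (e w) \<noteq> 0 \<and> \<bar>Av (S w) gam (e w)\<bar> - Bv (S w) lam gam \<noteq> 0"
proof -
  have "AE w in M. \<forall>t\<in>{1..K}. \<forall>u\<in>V t. \<not> (S w = t \<and> e w = u)"
    by (rule AE_finite_allI, simp, rule AE_finite_allI, simp add: V_def, rule point_null, simp)
  with S_AE show ?thesis
  proof eventually_elim
    case (elim w)
    let ?t = "S w"
    have t: "?t \<in> {1..K}" using elim by auto
    have nv: "e w \<notin> V ?t" using elim by auto
    have a: "aa ?t > 0" using aa_pos t by auto
    have lin: "Av ?t gam (e w) = Av ?t gam 0 - 2 * aa ?t * e w" by (rule Av_lin)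
    have "Av ?t gam (e w) \<noteq> 0"
    proof
      assume "Av ?t gam (e w) = 0"
      then have "e w = Av ?t gam 0/(2*aa ?t)" using lin a by (simp add: field_simps)
      then show False using nv unfolding V_def by auto
    qed
    moreover have "\<bar>Av ?t gam (e w)\<bar> - Bv ?t lam gam \<noteq> 0"
    proof
      assume "\<bar>Av ?t gam (e w)\<bar> - Bv ?t lam gam = 0"
      then have "Av ?t gam (e w) = Bv ?t lam gam \<or> Av ?t gam (e w) = - Bv ?t lam gam" by (auto simp: abs_if split: if_splits)
      then have "e w = (Av ?t gam 0 - Bv ?t lam gam)/(2*aa ?t) \<or> e w = (Av ?t gam 0 + Bv ?t lam gam)/(2*aa ?t)"
        using lin a by (auto simp: field_simps)
      then show False using nv unfolding V_def by auto
    qed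
    ultimately show ?case by simp
  qed
qed

lemma ev_sub: "ev M P \<inter> space M = ev M P" unfolding ev_def by auto

lemma integral_ev: "Measurable.pred M P \<Longrightarrow> integral\<^sup>L M (\<lambda>w. c * indicator (ev M P) w) = c * measure M (ev M P)"
  by (simp add: ev_sub)

lemma sum_upd: "s \<in> {1..K} \<Longrightarrow> (\<Sum>t=1..K. (f(s := f s + x)) t * \<alpha> t) = (\<Sum>t=1..K. f t * \<alpha> t) + x * \<alpha> s"
proof -
  assume s: "s \<in> {1..K}"
  have "(\<Sum>t=1..K. (f(s := f s + x)) t * \<alpha> t) = (\<Sum>t=1..K. f t * \<alpha> t + (if t = s then x * \<alpha> s else 0))"
    by (intro sum.cong) (auto simp: algebra_simps)
  also have "\<dots> = (\<Sum>t=1..K. f t * \<alpha> t) + x * \<alpha> s" using s by (simp add: sum.distrib)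
  finally show ?thesis .
qed

lemma sg_upd: "s \<in> {1..K} \<Longrightarrow> sg (f(s := f s + x)) = sg f + x"
proof -
  assume s: "s \<in> {1..K}"
  have "sg (f(s := f s + x)) = (\<Sum>t=1..K. f t + (if t = s then x else 0))"
    unfolding sg_def by (intro sum.cong) auto
  also have "\<dots> = sg f + x" using s by (simp add: sum.distrib sg_def)
  finally show ?thesis .
qed

lemma obj_min: "(\<Sum>t=1..K. lam t * \<alpha> t) + integral\<^sup>L M (Hf lam gam)
        \<le> (\<Sum>t=1..K. lm t * \<alpha> t) + integral\<^sup>L M (Hf lm gm)"
  using minim dual_eq by metis

definition "Pacc s = measure M (ev M (\<lambda>w. S w = s \<and> Gw lam gam w > 0))"

lemma lam_dir:
  assumes s: "s \<in> {1..K}" and sig: "\<sigma> = 1 \<or> \<sigma> = (-1::real)"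
  shows "0 \<le> \<sigma> * \<alpha> s - \<sigma> * Pacc s / pp s"
proof -
  have "0 \<le> \<sigma> * \<alpha> s + integral\<^sup>L M (\<lambda>w. \<Sum>t\<in>{1..K}. ind t w * (dd ((\<lambda>_. 0) t) ((\<lambda>t. if t = s then \<sigma> else 0) t) w / pp t))"
  proof (rule dir_ineq[where L="\<lambda>\<tau>. lam(s := lam s + \<sigma> * \<tau>)" and Gm="\<lambda>\<tau>. gam"])
    show "(\<Sum>t=1..K. lam t * \<alpha> t) + integral\<^sup>L M (Hf lam gam)
        \<le> (\<Sum>t=1..K. (lam(s := lam s + \<sigma> * \<tau>)) t * \<alpha> t) + integral\<^sup>L M (Hf (lam(s := lam s + \<sigma> * \<tau>)) gam)" for \<tau>
      by (rule obj_min)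
    show "(\<Sum>t=1..K. (lam(s := lam s + \<sigma> * \<tau>)) t * \<alpha> t) = (\<Sum>t=1..K. lam t * \<alpha> t) + \<tau> * (\<sigma> * \<alpha> s)" for \<tau>
      using sum_upd[OF s] by simp
    show "Av t gam u = Av t gam u + \<tau> * 0" for t u \<tau> by simp
    show "Bv t (lam(s := lam s + \<sigma> * \<tau>)) gam = Bv t lam gam + \<tau> * (if t = s then \<sigma> else 0)" for t \<tau>
      unfolding Bv_def by auto
    show "AE w in M. Av (S w) gam (e w) \<noteq> 0 \<and> \<bar>Av (S w) gam (e w)\<bar> - Bv (S w) lam gam \<noteq> 0" by (rule good)
  qed
  also have "integral\<^sup>L M (\<lambda>w. \<Sum>t\<in>{1..K}. ind t w * (dd ((\<lambda>_. 0) t) ((\<lambda>t. if t = s then \<sigma> else 0) t) w / pp t))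
     = integral\<^sup>L M (\<lambda>w. (- \<sigma> / pp s) * indicator (ev M (\<lambda>w. S w = s \<and> Gw lam gam w > 0)) w)"
  proof (rule Bochner_Integration.integral_cong[OF refl])
    fix w assume w: "w \<in> space M"
    have "(\<Sum>t\<in>{1..K}. ind t w * (dd ((\<lambda>_. 0) t) ((\<lambda>t. if t = s then \<sigma> else 0) t) w / pp t))
      = (\<Sum>t\<in>{1..K}. if t = s then ind s w * (dd 0 \<sigma> w / pp s) else 0)"
      by (intro sum.cong) (auto simp: dd_def)
    also have "\<dots> = ind s w * (dd 0 \<sigma> w / pp s)" using s by simp
    also have "\<dots> = (- \<sigma> / pp s) * indicator (ev M (\<lambda>w. S w = s \<and> Gw lam gam w > 0)) w"
      using w by (auto simp: ind_simp dd_def ev_def indicator_def)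
    finally show "(\<Sum>t\<in>{1..K}. ind t w * (dd ((\<lambda>_. 0) t) ((\<lambda>t. if t = s then \<sigma> else 0) t) w / pp t))
      = (- \<sigma> / pp s) * indicator (ev M (\<lambda>w. S w = s \<and> Gw lam gam w > 0)) w" .
  qed
  also have "\<dots> = (- \<sigma> / pp s) * Pacc s" unfolding Pacc_def by (rule integral_ev) measurable
  finally show ?thesis by simp
qed

lemma NA_eq: "s \<in> {1..K} \<Longrightarrow> Pacc s = \<alpha> s * pp s"
proof -
  assume s: "s \<in> {1..K}"
  have "0 \<le> \<alpha> s - Pacc s / pp s" using lam_dir[OF s, of 1] by simp
  moreover have "0 \<le> - \<alpha> s + Pacc s / pp s" using lam_dir[OF s, of "-1"] by simp
  ultimately have "Pacc s / pp s = \<alpha> s" by linarith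
  then show ?thesis using pp_pos'[OF s] by (simp add: field_simps)
qed


end

context ctx begin
definition "Phi t u = (if \<bar>Av t gam u\<bar> - Bv t lam gam \<le> 0 then Rej
    else if 1/2 + (ab * gam t / (\<alpha> t * pp t) - sg gam) / 2 \<le> u then L1 else L0)"

lemma gs_Phi: "gs x t = Phi t (\<eta> x t)"
  unfolding gs_def gstar_def Let_def Gfun_eq Phi_def ab_def pp_def sg_def by simp

lemma Phi_meas[measurable]: "(\<lambda>w. Phi t (f w)) \<in> measurable N (count_space UNIV)"
  if [measurable]: "f \<in> borel_measurable N"
  unfolding Phi_def Av_def by measurable

definition "gw w = gs (X w) (S w)"

lemma gw_meas[measurable]: "gw \<in> measurable M (count_space UNIV)"
proof -
  have "gw = (\<lambda>w. Phi (S w) (e w))" unfolding gw_def gs_Phi e_def by simp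
  also have "\<dots> \<in> measurable M (count_space UNIV)"
    by (rule measurable_compose_countable[OF _ S_meas]) measurable
  finally show ?thesis .
qed

lemma gs_classifier: "is_classifier gs"
proof -
  have et[measurable]: "(\<lambda>(x, s). \<eta> x s) \<in> borel_measurable (borel \<Otimes>\<^sub>M count_space UNIV)"
    using reg unfolding is_regression_def by auto
  have "(\<lambda>(x, s). gs x s) = (\<lambda>p. Phi (snd p) ((\<lambda>(x, s). \<eta> x s) p))"
    by (auto simp: gs_Phi)
  also have "\<dots> \<in> measurable (borel \<Otimes>\<^sub>M count_space UNIV) (count_space UNIV)"
    by (rule measurable_compose_countable[where g=snd]) measurable
  finally show ?thesis unfolding is_classifier_def .
qed

lemma gw_cases:
  assumes "w \<in> space M" "S w \<in> {1..K}"
  shows "gw w = (if Gw lam gam w \<le> 0 then Rej else if Av (S w) gam (e w) \<le> 0 then L1 else L0)"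
  using assms gs_eq unfolding gw_def Gw_S e_def by simp

definition "Pone s = measure M (ev M (\<lambda>w. S w = s \<and> gw w = L1))"
definition "Pb = measure M (ev M (\<lambda>w. gw w = L1))"

lemma gam_dir:
  assumes s: "s \<in> {1..K}" and sig: "\<sigma> = 1 \<or> \<sigma> = (-1::real)"
  shows "0 \<le> \<sigma> * (Pb / ab) - \<sigma> * (Pone s / (\<alpha> s * pp s))"
proof -
  define k where "k t = \<sigma> * ((if t = s then 1/(2*\<alpha> t) else 0) - aa t)" for t
  have "0 \<le> 0 + integral\<^sup>L M (\<lambda>w. \<Sum>t\<in>{1..K}. ind t w * (dd (k t) (k t) w / pp t))"
  proof (rule dir_ineq[where L="\<lambda>\<tau>. lam" and Gm="\<lambda>\<tau>. gam(s := gam s + \<sigma> * \<tau>)"])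
    show "(\<Sum>t=1..K. lam t * \<alpha> t) + integral\<^sup>L M (Hf lam gam)
        \<le> (\<Sum>t=1..K. lam t * \<alpha> t) + integral\<^sup>L M (Hf lam (gam(s := gam s + \<sigma> * \<tau>)))" for \<tau>
      by (rule obj_min)
    show "(\<Sum>t=1..K. lam t * \<alpha> t) = (\<Sum>t=1..K. lam t * \<alpha> t) + \<tau> * 0" for \<tau> by simp
    show "Av t (gam(s := gam s + \<sigma> * \<tau>)) u = Av t gam u + \<tau> * k t" if "t \<in> {1..K}" for t u \<tau>
      unfolding Av_def k_def sg_upd[OF s] using al_pos[OF that]
      by (cases "t = s") (simp_all add: field_simps)
    show "Bv t lam (gam(s := gam s + \<sigma> * \<tau>)) = Bv t lam gam + \<tau> * k t" if "t \<in> {1..K}" for t \<tau>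
      unfolding Bv_def k_def sg_upd[OF s] using al_pos[OF that]
      by (cases "t = s") (simp_all add: field_simps)
    show "AE w in M. Av (S w) gam (e w) \<noteq> 0 \<and> \<bar>Av (S w) gam (e w)\<bar> - Bv (S w) lam gam \<noteq> 0" by (rule good)
  qed
  also have "integral\<^sup>L M (\<lambda>w. \<Sum>t\<in>{1..K}. ind t w * (dd (k t) (k t) w / pp t))
     = integral\<^sup>L M (\<lambda>w. (\<sigma> / ab) * indicator (ev M (\<lambda>w. gw w = L1)) w
          + (- \<sigma> / (\<alpha> s * pp s)) * indicator (ev M (\<lambda>w. S w = s \<and> gw w = L1)) w)"
  proof (rule integral_cong_AE)
    show "AE w in M. (\<Sum>t\<in>{1..K}. ind t w * (dd (k t) (k t) w / pp t)) =
       (\<sigma> / ab) * indicator (ev M (\<lambda>w. gw w = L1)) w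
          + (- \<sigma> / (\<alpha> s * pp s)) * indicator (ev M (\<lambda>w. S w = s \<and> gw w = L1)) w"
      using S_AE AE_space
    proof eventually_elim
      case (elim w)
      then have w: "w \<in> space M" and t: "S w \<in> {1..K}" by auto
      have p: "pp (S w) > 0" "\<alpha> (S w) > 0" "ab > 0" using t pp_pos' al_pos ab_pos by auto
      have c: "-2 * k (S w) / pp (S w) = \<sigma> / ab + (if S w = s then - \<sigma> / (\<alpha> s * pp s) else 0)"
        unfolding k_def aa_def using p by (cases "S w = s") (simp_all add: field_simps)
      have "(\<Sum>t\<in>{1..K}. ind t w * (dd (k t) (k t) w / pp t)) = dd (k (S w)) (k (S w)) w / pp (S w)"
        by (rule sum_collapse[OF w t])
      also have "\<dots> = (if gw w = L1 then -2 * k (S w) / pp (S w) else 0)"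
        unfolding dd_def gw_cases[OF w t] by auto
      also have "\<dots> = (\<sigma> / ab) * indicator (ev M (\<lambda>w. gw w = L1)) w
          + (- \<sigma> / (\<alpha> s * pp s)) * indicator (ev M (\<lambda>w. S w = s \<and> gw w = L1)) w"
        unfolding c using w by (auto simp: ev_def indicator_def)
      finally show ?case .
    qed
  qed measurable
  also have "\<dots> = (\<sigma> / ab) * Pb + (- \<sigma> / (\<alpha> s * pp s)) * Pone s"
  proof -
    have i1: "integrable M (\<lambda>w. c * indicator (ev M P) w :: real)" if "Measurable.pred M P" for c P
      using that by (intro integrable_mult_right) (simp add: integrable_indicator_iff ev_sub ev_sets emeasure_eq_measure)
    show ?thesis
      by (subst Bochner_Integration.integral_add[OF i1 i1], measurable, measurable)
        (simp add: Pb_def Pone_def integral_ev[where P="\<lambda>w. gw w = L1"] integral_ev[where P="\<lambda>w. S w = s \<and> gw w = L1"])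
  qed
  finally show ?thesis by simp
qed

lemma PT_eq: "s \<in> {1..K} \<Longrightarrow> Pone s = Pb / ab * (\<alpha> s * pp s)"
proof -
  assume s: "s \<in> {1..K}"
  have "0 \<le> Pb / ab - Pone s / (\<alpha> s * pp s)" using gam_dir[OF s, of 1] by simp
  moreover have "0 \<le> - (Pb / ab) + Pone s / (\<alpha> s * pp s)" using gam_dir[OF s, of "-1"] by simp
  ultimately have "Pone s / (\<alpha> s * pp s) = Pb / ab" by linarith
  then show ?thesis using pp_pos'[OF s] al_pos[OF s] by (simp add: field_simps)
qed

end

context ctx begin

lemma cls_meas:
  assumes "is_classifier f"
  shows "(\<lambda>w. f (X w) (S w)) \<in> measurable M (count_space UNIV)"
  using measurable_compose[OF XS_meas assms[unfolded is_classifier_def]] by simp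

lemma cls_pred[measurable]:
  assumes "is_classifier f"
  shows "Measurable.pred M (\<lambda>w. f (X w) (S w) = c)"
proof -
  have "(\<lambda>w. f (X w) (S w) = c) = (\<lambda>v. v = c) \<circ> (\<lambda>w. f (X w) (S w))" by auto
  also have "\<dots> \<in> measurable M (count_space UNIV)"
    by (rule measurable_comp[OF cls_meas[OF assms]]) simp
  finally show ?thesis by simp
qed

lemma measure_decomp:
  assumes [measurable]: "Measurable.pred M P"
  shows "measure M (ev M P) = (\<Sum>t\<in>{1..K}. measure M (ev M (\<lambda>w. S w = t \<and> P w)))"
proof -
  have "measure M (ev M P) = integral\<^sup>L M (indicator (ev M P))" by (simp add: ev_sub)
  also have "\<dots> = integral\<^sup>L M (\<lambda>w. \<Sum>t\<in>{1..K}. indicator (ev M (\<lambda>w. S w = t \<and> P w)) w)"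
  proof (rule integral_cong_AE)
    show "AE w in M. indicator (ev M P) w = (\<Sum>t\<in>{1..K}. indicator (ev M (\<lambda>w. S w = t \<and> P w)) w :: real)"
      using S_AE AE_space
    proof eventually_elim
      case (elim w)
      then have w: "w \<in> space M" and t: "S w \<in> {1..K}" by auto
      have "(\<Sum>t\<in>{1..K}. indicator (ev M (\<lambda>w. S w = t \<and> P w)) w :: real)
        = (\<Sum>t\<in>{1..K}. ind t w * indicator (ev M P) w)"
        using w by (intro sum.cong) (auto simp: ind_simp ev_def indicator_def)
      also have "\<dots> = indicator (ev M P) w" by (rule sum_collapse[OF w t])
      finally show ?case by simp
    qed
  qed measurable
  also have "\<dots> = (\<Sum>t\<in>{1..K}. integral\<^sup>L M (indicator (ev M (\<lambda>w. S w = t \<and> P w))))"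
    by (rule Bochner_Integration.integral_sum)
      (simp add: integrable_indicator_iff ev_sub ev_sets emeasure_eq_measure)
  also have "\<dots> = (\<Sum>t\<in>{1..K}. measure M (ev M (\<lambda>w. S w = t \<and> P w)))" by (simp add: ev_sub)
  finally show ?thesis .
qed

definition "NAm f t = measure M (ev M (\<lambda>w. S w = t \<and> f (X w) (S w) \<noteq> Rej))"
definition "PTm f t = measure M (ev M (\<lambda>w. S w = t \<and> f (X w) (S w) = L1))"
definition "Pa f = measure M (ev M (\<lambda>w. f (X w) (S w) \<noteq> Rej))"
definition "Pbf f = measure M (ev M (\<lambda>w. f (X w) (S w) = L1))"
definition "Perr f = measure M (ev M (\<lambda>w. (f (X w) (S w) = L1 \<and> Y w \<noteq> 1) \<or> (f (X w) (S w) = L0 \<and> Y w \<noteq> 0)))"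

lemma NA_m: "NA M X S f t = NAm f t / pp t"
  unfolding NA_def cprob_def NAm_def pp_def psz_def by (rule arg_cong2[where f="(/)"]) (auto simp: ev_def intro!: arg_cong[where f="measure M"])

lemma PTs_m: "PTs M X S f t = PTm f t / NAm f t"
  unfolding PTs_def cprob_def NAm_def PTm_def by (rule arg_cong2[where f="(/)"]) (auto simp: ev_def intro!: arg_cong[where f="measure M"])

lemma PT_m: "PT M X S f = Pbf f / Pa f"
  unfolding PT_def cprob_def Pa_def Pbf_def by (rule arg_cong2[where f="(/)"]) (auto simp: ev_def intro!: arg_cong[where f="measure M"])

lemma risk_m: "risk M X S Y f = Perr f / Pa f"
  unfolding risk_def cprob_def Pa_def Perr_def by (rule arg_cong2[where f="(/)"]) (auto simp: ev_def intro!: arg_cong[where f="measure M"])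

lemma Pa_sum: "is_classifier f \<Longrightarrow> Pa f = (\<Sum>t\<in>{1..K}. NAm f t)"
  unfolding Pa_def NAm_def by (rule measure_decomp) measurable

lemma Pbf_sum: "is_classifier f \<Longrightarrow> Pbf f = (\<Sum>t\<in>{1..K}. PTm f t)"
  unfolding Pbf_def PTm_def by (rule measure_decomp) measurable

lemma ab_sum: "ab = (\<Sum>t\<in>{1..K}. \<alpha> t * pp t)"
  unfolding ab_def abar_def pp_def by (simp add: mult.commute)

end

context ctx begin

lemma Y_int: "integrable M Y"
  by (rule integrable_const_bound[where B=1]) (use Y_AE in \<open>auto elim: AE_mp\<close>, rule Y_meas)

lemma Yi_int: "A \<in> sets M \<Longrightarrow> integrable M (\<lambda>w. Y w * indicator A w)"
  by (rule integrable_real_mult_indicator[OF _ Y_int])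

lemma ei_int: "A \<in> sets M \<Longrightarrow> integrable M (\<lambda>w. e w * indicator A w)"
  by (rule integrable_real_mult_indicator[OF _ e_int])

lemma reg_ind:
  assumes f: "is_classifier f"
  shows "integral\<^sup>L M (\<lambda>w. Y w * indicator (ev M (\<lambda>w. f (X w) (S w) \<in> C)) w)
       = integral\<^sup>L M (\<lambda>w. e w * indicator (ev M (\<lambda>w. f (X w) (S w) \<in> C)) w)"
proof -
  define B where "B = (\<lambda>(x, s). f x s) -` C \<inter> space (borel \<Otimes>\<^sub>M count_space UNIV)"
  have B: "B \<in> sets (borel \<Otimes>\<^sub>M count_space UNIV)"
    unfolding B_def using f unfolding is_classifier_def by (intro measurable_sets) auto
  have evB: "ev M (\<lambda>w. (X w, S w) \<in> B) = ev M (\<lambda>w. f (X w) (S w) \<in> C)"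
    unfolding B_def ev_def by (auto simp: space_pair_measure)
  have "(LINT w:ev M (\<lambda>w. (X w, S w) \<in> B)|M. Y w) = (LINT w:ev M (\<lambda>w. (X w, S w) \<in> B)|M. \<eta> (X w) (S w))"
    using reg B unfolding is_regression_def by blast
  then show ?thesis unfolding evB set_lebesgue_integral_def e_def by (simp add: mult.commute)
qed

end

context ctx begin

lemma feas_facts:
  assumes h: "DPWA_feasible M X S K \<alpha> h"
  shows "\<And>t. t \<in> {1..K} \<Longrightarrow> NAm h t = \<alpha> t * pp t"
    and "Pa h = ab"
    and "\<And>t. t \<in> {1..K} \<Longrightarrow> PTm h t = PT M X S h * (\<alpha> t * pp t)"
    and "Pbf h = PT M X S h * ab"
proof -
  have cl: "is_classifier h" using h unfolding DPWA_feasible_def by auto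
  show na: "NAm h t = \<alpha> t * pp t" if t: "t \<in> {1..K}" for t
  proof -
    have "NAm h t / pp t = \<alpha> t" using h t unfolding DPWA_feasible_def NA_m by auto
    then show ?thesis using pp_pos'[OF t] by (simp add: field_simps)
  qed
  show pa: "Pa h = ab" unfolding Pa_sum[OF cl] ab_sum by (intro sum.cong) (auto simp: na)
  show "PTm h t = PT M X S h * (\<alpha> t * pp t)" if t: "t \<in> {1..K}" for t
  proof -
    have "PTm h t / NAm h t = PT M X S h" using h t unfolding DPWA_feasible_def PTs_m by auto
    moreover have "NAm h t > 0" using na[OF t] pp_pos'[OF t] al_pos[OF t] by simp
    ultimately have "PTm h t / (\<alpha> t * pp t) = PT M X S h" "\<alpha> t * pp t > 0" using na[OF t] by auto
    then show ?thesis by (metis divide_eq_eq less_irrefl)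
  qed
  show "Pbf h = PT M X S h * ab" using ab_pos unfolding PT_m pa by simp
qed

lemma gs_NAm: "t \<in> {1..K} \<Longrightarrow> NAm gs t = Pacc t"
  unfolding NAm_def Pacc_def
  by (rule arg_cong[where f="measure M"]) (auto simp: ev_def gw_cases[unfolded gw_def] split: if_splits)

lemma gs_PTm: "PTm gs t = Pone t"
  unfolding PTm_def Pone_def gw_def by simp

lemma gs_Pbf: "Pbf gs = Pb"
  unfolding Pbf_def Pb_def gw_def by simp

lemma gs_Pa: "Pa gs = ab"
  unfolding Pa_sum[OF gs_classifier] ab_sum by (intro sum.cong) (auto simp: gs_NAm NA_eq)

lemma gs_feasible: "DPWA_feasible M X S K \<alpha> gs"
  unfolding DPWA_feasible_def
proof (intro conjI gs_classifier ballI)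
  fix t assume t: "t \<in> {1..K}"
  show "NA M X S gs t = \<alpha> t" unfolding NA_m gs_NAm[OF t] NA_eq[OF t] using pp_pos'[OF t] by simp
  show "PTs M X S gs t = PT M X S gs"
    unfolding PTs_m PT_m gs_NAm[OF t] NA_eq[OF t] gs_PTm PT_eq[OF t] gs_Pbf gs_Pa
    using pp_pos'[OF t] al_pos[OF t] by simp
qed

end

context ctx begin

lemma ind_int: "A \<in> sets M \<Longrightarrow> integrable M (\<lambda>w. indicator A w :: real)"
  by (simp add: integrable_indicator_iff emeasure_eq_measure)

lemma Perr_eq:
  assumes f: "is_classifier f"
  shows "Perr f = integral\<^sup>L M (\<lambda>w. e w * indicator (ev M (\<lambda>w. f (X w) (S w) \<noteq> Rej)) w) + Pbf f
     - 2 * integral\<^sup>L M (\<lambda>w. e w * indicator (ev M (\<lambda>w. f (X w) (S w) = L1)) w)"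
proof -
  note [measurable] = cls_pred[OF f]
  define A where "A = ev M (\<lambda>w. f (X w) (S w) \<noteq> Rej)"
  define B where "B = ev M (\<lambda>w. f (X w) (S w) = L1)"
  define E where "E = ev M (\<lambda>w. (f (X w) (S w) = L1 \<and> Y w \<noteq> 1) \<or> (f (X w) (S w) = L0 \<and> Y w \<noteq> 0))"
  have sA: "A \<in> sets M" unfolding A_def by measurable
  have sB: "B \<in> sets M" unfolding B_def by measurable
  have sE: "E \<in> sets M" unfolding E_def using Y_meas by measurable
  have "Perr f = integral\<^sup>L M (indicator E)" unfolding Perr_def E_def by (simp add: ev_sub)
  also have "\<dots> = integral\<^sup>L M (\<lambda>w. Y w * indicator A w + indicator B w - 2 * (Y w * indicator B w))"
  proof (rule integral_cong_AE)
    show "AE w in M. indicator E w = Y w * indicator A w + indicator B w - 2 * (Y w * indicator B w)"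
      using Y_AE AE_space
    proof eventually_elim
      case (elim w)
      then show ?case unfolding A_def B_def E_def ev_def
        by (cases "f (X w) (S w)") (auto simp: indicator_def)
    qed
  qed (use sA sB sE Y_meas in measurable)
  also have "\<dots> = integral\<^sup>L M (\<lambda>w. Y w * indicator A w) + integral\<^sup>L M (indicator B) - 2 * integral\<^sup>L M (\<lambda>w. Y w * indicator B w)"
    using Yi_int[OF sA] Yi_int[OF sB] ind_int[OF sB] by simp
  also have "\<dots> = integral\<^sup>L M (\<lambda>w. e w * indicator A w) + Pbf f - 2 * integral\<^sup>L M (\<lambda>w. e w * indicator B w)"
    using reg_ind[OF f, of "-{Rej}"] reg_ind[OF f, of "{L1}"] unfolding A_def B_def Pbf_def
    by (simp add: ev_sub)
  finally show ?thesis unfolding A_def B_def .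
qed

definition "Q f w = e w * indicator (ev M (\<lambda>w. f (X w) (S w) \<noteq> Rej)) w / ab
   + indicator (ev M (\<lambda>w. f (X w) (S w) = L1)) w / ab
   - 2 * (e w * indicator (ev M (\<lambda>w. f (X w) (S w) = L1)) w) / ab
   + (\<Sum>t\<in>{1..K}. lam t / pp t * indicator (ev M (\<lambda>w. S w = t \<and> f (X w) (S w) \<noteq> Rej)) w)
   + (\<Sum>t\<in>{1..K}. gam t / (\<alpha> t * pp t) * indicator (ev M (\<lambda>w. S w = t \<and> f (X w) (S w) = L1)) w)
   - sg gam / ab * indicator (ev M (\<lambda>w. f (X w) (S w) = L1)) w"

lemma Q_int:
  assumes f: "is_classifier f"
  shows "integrable M (Q f)"
    and "integral\<^sup>L M (Q f) = Perr f / ab + (\<Sum>t\<in>{1..K}. lam t / pp t * NAm f t)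
        + (\<Sum>t\<in>{1..K}. gam t / (\<alpha> t * pp t) * PTm f t) - sg gam / ab * Pbf f"
proof -
  note [measurable] = cls_pred[OF f]
  define A where "A = ev M (\<lambda>w. f (X w) (S w) \<noteq> Rej)"
  define B where "B = ev M (\<lambda>w. f (X w) (S w) = L1)"
  define At where "At t = ev M (\<lambda>w. S w = t \<and> f (X w) (S w) \<noteq> Rej)" for t
  define Bt where "Bt t = ev M (\<lambda>w. S w = t \<and> f (X w) (S w) = L1)" for t
  have sA: "A \<in> sets M" unfolding A_def by measurable
  have sB: "B \<in> sets M" unfolding B_def by measurable
  have sAt: "At t \<in> sets M" for t unfolding At_def by measurable
  have sBt: "Bt t \<in> sets M" for t unfolding Bt_def by measurable
  have i1: "integrable M (\<lambda>w. e w * indicator A w / ab)" using ei_int[OF sA] by simp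
  have i2: "integrable M (\<lambda>w. indicator B w / ab :: real)" using ind_int[OF sB] by simp
  have i3: "integrable M (\<lambda>w. 2 * (e w * indicator B w) / ab)" using ei_int[OF sB] by simp
  have i4: "integrable M (\<lambda>w. \<Sum>t\<in>{1..K}. lam t / pp t * indicator (At t) w)"
    using ind_int[OF sAt] by (intro Bochner_Integration.integrable_sum integrable_mult_right) auto
  have i5: "integrable M (\<lambda>w. \<Sum>t\<in>{1..K}. gam t / (\<alpha> t * pp t) * indicator (Bt t) w)"
    using ind_int[OF sBt] by (intro Bochner_Integration.integrable_sum integrable_mult_right) auto
  have i6: "integrable M (\<lambda>w. sg gam / ab * indicator B w :: real)" using ind_int[OF sB] by simp
  have Qe: "Q f = (\<lambda>w. e w * indicator A w / ab + indicator B w / ab - 2 * (e w * indicator B w) / ab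
     + (\<Sum>t\<in>{1..K}. lam t / pp t * indicator (At t) w)
     + (\<Sum>t\<in>{1..K}. gam t / (\<alpha> t * pp t) * indicator (Bt t) w)
     - sg gam / ab * indicator B w)"
    unfolding Q_def A_def B_def At_def Bt_def by simp
  show "integrable M (Q f)" unfolding Qe using i1 i2 i3 i4 i5 i6 by auto
  have "integral\<^sup>L M (Q f) = integral\<^sup>L M (\<lambda>w. e w * indicator A w / ab) + integral\<^sup>L M (\<lambda>w. indicator B w / ab)
     - integral\<^sup>L M (\<lambda>w. 2 * (e w * indicator B w) / ab)
     + integral\<^sup>L M (\<lambda>w. \<Sum>t\<in>{1..K}. lam t / pp t * indicator (At t) w)
     + integral\<^sup>L M (\<lambda>w. \<Sum>t\<in>{1..K}. gam t / (\<alpha> t * pp t) * indicator (Bt t) w)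
     - integral\<^sup>L M (\<lambda>w. sg gam / ab * indicator B w)"
    unfolding Qe using i1 i2 i3 i4 i5 i6
    by (simp add: Bochner_Integration.integral_add Bochner_Integration.integral_diff)
  also have "\<dots> = integral\<^sup>L M (\<lambda>w. e w * indicator A w) / ab + Pbf f / ab
     - 2 * integral\<^sup>L M (\<lambda>w. e w * indicator B w) / ab
     + (\<Sum>t\<in>{1..K}. lam t / pp t * NAm f t)
     + (\<Sum>t\<in>{1..K}. gam t / (\<alpha> t * pp t) * PTm f t)
     - sg gam / ab * Pbf f"
  proof -
    have a: "integral\<^sup>L M (\<lambda>w. \<Sum>t\<in>{1..K}. lam t / pp t * indicator (At t) w) = (\<Sum>t\<in>{1..K}. lam t / pp t * NAm f t)"
      using ind_int[OF sAt]
      by (subst Bochner_Integration.integral_sum) (auto simp: NAm_def At_def ev_sub)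
    have b: "integral\<^sup>L M (\<lambda>w. \<Sum>t\<in>{1..K}. gam t / (\<alpha> t * pp t) * indicator (Bt t) w) = (\<Sum>t\<in>{1..K}. gam t / (\<alpha> t * pp t) * PTm f t)"
      using ind_int[OF sBt]
      by (subst Bochner_Integration.integral_sum) (auto simp: PTm_def Bt_def ev_sub)
    show ?thesis unfolding a b by (simp add: Pbf_def B_def ev_sub)
  qed
  also have "\<dots> = Perr f / ab + (\<Sum>t\<in>{1..K}. lam t / pp t * NAm f t)
        + (\<Sum>t\<in>{1..K}. gam t / (\<alpha> t * pp t) * PTm f t) - sg gam / ab * Pbf f"
    unfolding Perr_eq[OF f] A_def B_def by (simp add: diff_divide_distrib add_divide_distrib)
  finally show "integral\<^sup>L M (Q f) = Perr f / ab + (\<Sum>t\<in>{1..K}. lam t / pp t * NAm f t)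
        + (\<Sum>t\<in>{1..K}. gam t / (\<alpha> t * pp t) * PTm f t) - sg gam / ab * Pbf f" .
qed

lemma sum_ind:
  assumes "w \<in> space M" "S w \<in> {1..K}"
  shows "(\<Sum>t\<in>{1..K}. c t * indicator (ev M (\<lambda>w. S w = t \<and> P w)) w) = (if P w then c (S w) else 0 :: real)"
proof -
  have "(\<Sum>t\<in>{1..K}. c t * indicator (ev M (\<lambda>w. S w = t \<and> P w)) w) = (\<Sum>t\<in>{1..K}. ind t w * (if P w then c t else 0))"
    using assms(1) by (intro sum.cong) (auto simp: ind_simp ev_def indicator_def)
  also have "\<dots> = (if P w then c (S w) else 0)" by (rule sum_collapse[OF assms])
  finally show ?thesis .
qed

definition "psi f w = (case f (X w) (S w) of Rej \<Rightarrow> 0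
    | L1 \<Rightarrow> Bv (S w) lam gam + Av (S w) gam (e w) | L0 \<Rightarrow> Bv (S w) lam gam - Av (S w) gam (e w))"

lemma Q_pt:
  assumes w: "w \<in> space M" and t: "S w \<in> {1..K}"
  shows "Q f w = psi f w / pp (S w)"
proof -
  have p: "pp (S w) > 0" "\<alpha> (S w) > 0" "ab > 0" using t pp_pos' al_pos ab_pos by auto
  show ?thesis
    unfolding Q_def sum_ind[OF w t] psi_def
    using w p by (cases "f (X w) (S w)") (simp_all add: ev_def Av_def Bv_def aa_def field_simps)
qed

lemma Q_min:
  assumes w: "w \<in> space M" and t: "S w \<in> {1..K}"
  shows "Q gs w \<le> Q f w"
proof -
  have p: "pp (S w) > 0" using t pp_pos' by auto
  have "psi gs w \<le> psi f w"
    using gw_cases[OF w t] unfolding psi_def gw_def Gw_S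
    by (cases "f (X w) (S w)") (auto split: if_splits)
  then show ?thesis unfolding Q_pt[OF w t] using p by (simp add: divide_right_mono)
qed

lemma Lag_feas:
  assumes h: "DPWA_feasible M X S K \<alpha> h"
  shows "integral\<^sup>L M (Q h) = Perr h / ab + (\<Sum>t\<in>{1..K}. lam t * \<alpha> t)"
proof -
  have cl: "is_classifier h" using h unfolding DPWA_feasible_def by auto
  have s1: "(\<Sum>t\<in>{1..K}. lam t / pp t * NAm h t) = (\<Sum>t\<in>{1..K}. lam t * \<alpha> t)"
  proof (rule sum.cong[OF refl])
    fix t assume t: "t \<in> {1..K}"
    show "lam t / pp t * NAm h t = lam t * \<alpha> t" using pp_pos'[OF t] by (simp add: feas_facts(1)[OF h t])
  qed
  have s2: "(\<Sum>t\<in>{1..K}. gam t / (\<alpha> t * pp t) * PTm h t) = PT M X S h * sg gam"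
    unfolding sg_def sum_distrib_left
  proof (rule sum.cong[OF refl])
    fix t assume t: "t \<in> {1..K}"
    show "gam t / (\<alpha> t * pp t) * PTm h t = PT M X S h * gam t"
      using pp_pos'[OF t] al_pos[OF t] by (simp add: feas_facts(3)[OF h t])
  qed
  show ?thesis unfolding Q_int(2)[OF cl] s1 s2 feas_facts(4)[OF h] using ab_pos by simp
qed

lemma gs_optimal: "DPWA_optimal M X S Y K \<alpha> gs"
  unfolding DPWA_optimal_def
proof (intro conjI allI impI gs_feasible)
  fix h assume h: "DPWA_feasible M X S K \<alpha> h"
  have cl: "is_classifier h" using h unfolding DPWA_feasible_def by auto
  have "integral\<^sup>L M (Q gs) \<le> integral\<^sup>L M (Q h)"
  proof (rule integral_mono_AE)
    show "integrable M (Q gs)" by (rule Q_int(1)[OF gs_classifier])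
    show "integrable M (Q h)" by (rule Q_int(1)[OF cl])
    show "AE w in M. Q gs w \<le> Q h w" using S_AE AE_space by eventually_elim (auto intro: Q_min)
  qed
  then have "Perr gs / ab \<le> Perr h / ab" unfolding Lag_feas[OF h] Lag_feas[OF gs_feasible] by simp
  then show "risk M X S Y gs \<le> risk M X S Y h"
    unfolding risk_m feas_facts(2)[OF h] feas_facts(2)[OF gs_feasible] .
qed

end

theorem theorem1:
  fixes M :: "'w measure" and X :: "'w \<Rightarrow> real ^ 'd" and S :: "'w \<Rightarrow> nat"
    and Y :: "'w \<Rightarrow> real" and K :: nat and \<alpha> :: "nat \<Rightarrow> real"
    and \<eta> :: "real ^ 'd \<Rightarrow> nat \<Rightarrow> real" and lam gam :: "nat \<Rightarrow> real"
  assumes "prob_space M"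
    and "X \<in> borel_measurable M"
    and "S \<in> measurable M (count_space UNIV)"
    and "Y \<in> borel_measurable M"
    and "AE w in M. S w \<in> {1..K}"
    and "AE w in M. Y w \<in> {0, 1}"
    and "\<forall>s\<in>{1..K}. psz M S s > 0"
    and "\<forall>s\<in>{1..K}. 0 < \<alpha> s \<and> \<alpha> s \<le> 1"
    and "is_regression M X S Y \<eta>"
    and "\<forall>s\<in>{1..K}. nonatomic
           (distr (uniform_measure M (ev M (\<lambda>w. S w = s))) borel (\<lambda>w. \<eta> (X w) (S w)))"
    and "\<forall>lam' gam'. dual_obj M X S K \<alpha> \<eta> lam gam \<le> dual_obj M X S K \<alpha> \<eta> lam' gam'"
  shows "DPWA_optimal M X S Y K \<alpha> (gstar M S K \<alpha> \<eta> lam gam)"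
  proof -
  interpret ctx M X S Y K \<alpha> \<eta> lam gam
    by (intro ctx.intro ctx_axioms.intro) (fact assms)+
  show ?thesis using gs_optimal unfolding gs_def .
qed

end
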